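(* There is a constant $K$ such that the following holds. Let $d\in\mathbb{N}$ and $0\le r\le s\le N$ with $s-r\ge d$. Let $\mathcal{L}$ be the event that $pr$ is a renewal point and the restriction of the partition to $\{0,\ldots,pr-1\}$ coincides with some given partition of this set. Let $\mathcal{R}$ be the event that $ps$ is a renewal point and the restriction of the partition to $\{ps,\ldots,pN-1\}$ coincides with some given partition of this set. Then $$\bigl|\mathbb{P}_N(\mathcal{L}\cap\mathcal{R})-\mathbb{P}_N(\mathcal{L})\mathbb{P}_N(\mathcal{R})\bigr|\le K\,\mathbb{P}_N(\mathcal{L})\,\mathbb{P}_N(\mathcal{R})\sup_{k\ge d}|u_k-\mu^{-1}| .$$
   Context: Setting. Let $R,\ell>0$, $p\in\mathbb{N}$ and $\gamma=\ell/R$. $\mathcal{Z}=\mathbb{R}\times[0,2\pi R]$. Laughlin's function. $$\Psi_N=\kappa_N\prod_{j<k}\bigl(e^{z_k/R}-e^{z_j/R}\bigr)^p e^{-\sum x_k^2/(2\ell^2)},$$ with $$\kappa_N=(N!)^{-1/2}(2\pi R\ell\sqrt\pi)^{-N/2}\exp\Bigl(-\tfrac12p^2\gamma^2\sum_{j=1}^N(j-1)^2\Bigr),$$ and $C_N=\|\Psi_N\|^2_{L^2(\mathcal{Z}^N)}$. Orbitals and coefficients. $\psi_k(z)\propto e^{kz/R}e^{-x^2/(2\ell^2)}$ are orthonormal, and $$\Psi_N=(N!)^{-1/2}\sum_{\mathbf m}a_N(\mathbf m)\prod_i\psi_{m_i}(z_i).$$ Renewal points of tuples. A number $pk$ with $0\le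 k\le N$ is a renewal point of $\mathbf m$ if the $k$ smallest entries sum to $pk(k-1)/2$. Renewal weights. $\alpha_n=\frac1{n!}\sum|a_n(\mathbf m)|^2$, summed over $\mathbf m\in\{0,\ldots,pn-p\}^n$ whose only renewal points are $0$ and $pn$. $r=\exp(-\lim_N\frac1N\ln C_N)$, $p_n=\alpha_nr^n$, and $u_N=C_Nr^N$. It is known that: - $u_N=\sum_{n_1+\cdots+n_D=N}p_{n_1}\cdots p_{n_D}$; - $\sum p_n=1$; - $\mu=\sum np_n<\infty$; - $u_N\to\mu^{-1}$. Partitions. $\mathcal{P}_N$ is the set of partitions of $\{0,\ldots,pN-1\}$ into rods $\{pj,\ldots,pj+pn-1\}$ with $n\ge1$. Its renewal points are the left endpoints of the rods together with $pN$. The probability $\mathbb{P}_N$ of a partition with rod lengths $pn_1,\ldots,pn_D$ is $p_{n_1}\cdots p_{n_D}/u_N$. *)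

theory Defs
  imports "HOL-Analysis.Analysis"
begin

definition rod :: "nat \<Rightarrow> nat \<Rightarrow> nat \<Rightarrow> nat set" where
  "rod p j n = {p * j ..< p * j + p * n}"

definition rod_partitions :: "nat \<Rightarrow> nat \<Rightarrow> nat set set set" where
  "rod_partitions p N = {P. \<Union>P = {0..<p * N}
      \<and> (\<forall>A\<in>P. \<forall>B\<in>P. A \<noteq> B \<longrightarrow> A \<inter> B = {})
      \<and> (\<forall>A\<in>P. \<exists>j n. n \<ge> 1 \<and> A = rod p j n)}"

definition renewal_points :: "nat \<Rightarrow> nat \<Rightarrow> nat set set \<Rightarrow> nat set" where
  "renewal_points p N P = Min ` P \<union> {p * N}"

definition restrict_part :: "nat set set \<Rightarrow> nat set \<Rightarrow> nat set set" where
  "restrict_part P S = (\<lambda>A. A \<inter> S) ` P - {{}}"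

definition compositions :: "nat \<Rightarrow> nat list set" where
  "compositions N = {xs. (\<forall>x\<in>set xs. x \<ge> 1) \<and> sum_list xs = N}"

text \<open>u_N = sum over n_1+...+n_D = N of p_{n_1}...p_{n_D} (the renewal weights are q).\<close>
definition renewal_u :: "(nat \<Rightarrow> real) \<Rightarrow> nat \<Rightarrow> real" where
  "renewal_u q N = (\<Sum>xs\<in>compositions N. prod_list (map q xs))"

definition part_weight :: "nat \<Rightarrow> (nat \<Rightarrow> real) \<Rightarrow> nat set set \<Rightarrow> real" where
  "part_weight p q P = (\<Prod>A\<in>P. q (card A div p))"

definition prob_N :: "nat \<Rightarrow> (nat \<Rightarrow> real) \<Rightarrow> nat \<Rightarrow> nat set set set \<Rightarrow> real" where
  "prob_N p q N E = (\<Sum>P\<in>rod_partitions p N \<inter> E. part_weight p q P) / renewal_u q N"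

definition event_L :: "nat \<Rightarrow> nat \<Rightarrow> nat \<Rightarrow> nat set set \<Rightarrow> nat set set set" where
  "event_L p N r Q = {P. p * r \<in> renewal_points p N P \<and> restrict_part P {0..<p * r} = Q}"

definition event_R :: "nat \<Rightarrow> nat \<Rightarrow> nat \<Rightarrow> nat set set \<Rightarrow> nat set set set" where
  "event_R p N s Q = {P. p * s \<in> renewal_points p N P \<and> restrict_part P {p * s..<p * N} = Q}"

definition renewal_mu :: "(nat \<Rightarrow> real) \<Rightarrow> real" where
  "renewal_mu q = (\<Sum>n. real n * q n)"

end

theory Submission
  imports Defs
begin


fun gen :: "nat \<Rightarrow> nat \<Rightarrow> nat list \<Rightarrow> nat set set" where
  "gen p j [] = {}"
| "gen p j (n#xs) = insert (rod p j n) (gen p (j+n) xs)"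

definition pos :: "nat list \<Rightarrow> bool" where "pos xs = (\<forall>x\<in>set xs. x \<ge> 1)"

lemma pos_simps[simp]: "pos [] = True" "pos (x#xs) = (x \<ge> 1 \<and> pos xs)"
  "pos (xs@ys) = (pos xs \<and> pos ys)"
  by (auto simp: pos_def)

lemma gen_append: "gen p j (xs@ys) = gen p j xs \<union> gen p (j + sum_list xs) ys"
  by (induction xs arbitrary: j) (auto simp: add.assoc)

lemma gen_sub: "A \<in> gen p j xs \<Longrightarrow> A \<subseteq> {p*j..<p*(j+sum_list xs)}"
proof (induction xs arbitrary: j)
  case Nil then show ?case by simp
next
  case (Cons n xs)
  then show ?case
    by (auto simp: rod_def algebra_simps) (fastforce simp: algebra_simps)+
qed

lemma gen_finite: "finite (gen p j xs)"
  by (induction xs arbitrary: j) auto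

lemma gen_rods: "A \<in> gen p j xs \<Longrightarrow> pos xs \<Longrightarrow> \<exists>j' n. n \<ge> 1 \<and> A = rod p j' n"
  by (induction xs arbitrary: j) auto

lemma rod_mem: "p \<ge> 1 \<Longrightarrow> n \<ge> 1 \<Longrightarrow> p*j \<in> rod p j n"
  by (auto simp: rod_def)

lemma rod_ne: "p \<ge> 1 \<Longrightarrow> n \<ge> 1 \<Longrightarrow> rod p j n \<noteq> {}"
  using rod_mem by blast

lemma Union_gen: "\<Union>(gen p j xs) = {p*j..<p*(j+sum_list xs)}"
proof (induction xs arbitrary: j)
  case Nil then show ?case by simp
next
  case (Cons n xs)
  have "rod p j n \<union> {p*(j+n)..<p*(j+n+sum_list xs)} = {p*j..<p*(j+(n+sum_list xs))}"
    by (auto simp: rod_def algebra_simps)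
  then show ?case using Cons by (simp add: add.assoc)
qed

lemma gen_disj: "pos xs \<Longrightarrow> A \<in> gen p j xs \<Longrightarrow> B \<in> gen p j xs \<Longrightarrow> A \<noteq> B \<Longrightarrow> A \<inter> B = {}"
proof (induction xs arbitrary: j A B)
  case Nil then show ?case by simp
next
  case (Cons n xs)
  have r: "rod p j n \<subseteq> {..<p*(j+n)}" by (auto simp: rod_def algebra_simps)
  have t: "C \<subseteq> {p*(j+n)..}" if "C \<in> gen p (j+n) xs" for C
    using gen_sub[OF that] by auto
  have d: "rod p j n \<inter> C = {}" if "C \<in> gen p (j+n) xs" for C
    using r t[OF that] by fastforce
  show ?case
  proof (cases "A = rod p j n")
    case True
    then have "B \<in> gen p (j+n) xs" using Cons by auto
    then show ?thesis using d True by blast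
  next
    case False
    then have A: "A \<in> gen p (j+n) xs" using Cons by auto
    show ?thesis
    proof (cases "B = rod p j n")
      case True then show ?thesis using d[OF A] by blast
    next
      case False
      then have "B \<in> gen p (j+n) xs" using Cons by auto
      then show ?thesis using Cons A by auto
    qed
  qed
qed

lemma rod_notin: "p \<ge> 1 \<Longrightarrow> n \<ge> 1 \<Longrightarrow> rod p j n \<notin> gen p (j+n) xs"
proof
  assume "p \<ge> 1" "n \<ge> 1" "rod p j n \<in> gen p (j+n) xs"
  then have "p*j \<in> {p*(j+n)..<p*(j+n+sum_list xs)}" using gen_sub rod_mem by blast
  with \<open>p\<ge>1\<close> \<open>n\<ge>1\<close> show False by (simp add: algebra_simps)
qed

lemma card_rod: "card (rod p j n) = p*n" by (simp add: rod_def)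

lemma gen_weight: "p \<ge> 1 \<Longrightarrow> pos xs \<Longrightarrow> part_weight p q (gen p j xs) = prod_list (map q xs)"
proof (induction xs arbitrary: j)
  case Nil then show ?case by (simp add: part_weight_def)
next
  case (Cons n xs)
  then have "part_weight p q (gen p j (n#xs)) = q n * part_weight p q (gen p (j+n) xs)"
    by (simp add: part_weight_def gen_finite rod_notin card_rod)
  then show ?case using Cons by simp
qed

lemma gen_inj: "p \<ge> 1 \<Longrightarrow> pos xs \<Longrightarrow> pos ys \<Longrightarrow> gen p j xs = gen p j ys \<Longrightarrow> xs = ys"
proof (induction xs arbitrary: j ys)
  case Nil then show ?case by (cases ys) auto
next
  case (Cons n xs)
  then obtain m ys' where ys: "ys = m#ys'" by (cases ys) auto
  have "rod p j n \<in> gen p j (n#xs)" by simp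
  then have "rod p j n \<in> gen p j ys" using Cons.prems(4) by metis
  then have mem: "rod p j n \<in> insert (rod p j m) (gen p (j+m) ys')" unfolding ys gen.simps .
  have "rod p j n \<notin> gen p (j+m) ys'"
  proof
    assume as: "rod p j n \<in> gen p (j+m) ys'"
    have m1: "m \<ge> 1" and n1: "n \<ge> 1" using Cons.prems ys by auto
    have "p*j \<in> rod p j n" using rod_mem Cons.prems(1) n1 by blast
    then have "p*j \<in> {p*(j+m)..<p*(j+m+sum_list ys')}" using gen_sub[OF as] by blast
    then have "p*(j+m) \<le> p*j" by simp
    with m1 Cons.prems(1) show False by (simp add: algebra_simps)
  qed
  with mem have "rod p j n = rod p j m" by blast
  then have "p*n = p*m" by (metis card_rod)
  then have nm: "n = m" using Cons by simp
  have "gen p (j+n) xs = gen p j (n#xs) - {rod p j n}" using rod_notin Cons by auto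
  also have "\<dots> = gen p (j+n) ys'" using Cons ys nm rod_notin by auto
  finally show ?case using Cons ys nm by auto
qed

lemma decomp: "p \<ge> 1 \<Longrightarrow> \<Union>P = {p*a..<p*(a+M)} \<Longrightarrow> (\<forall>A\<in>P. \<forall>B\<in>P. A \<noteq> B \<longrightarrow> A \<inter> B = {})
  \<Longrightarrow> (\<forall>A\<in>P. \<exists>j n. n \<ge> 1 \<and> A = rod p j n) \<Longrightarrow> \<exists>xs. pos xs \<and> sum_list xs = M \<and> P = gen p a xs"
proof (induction M arbitrary: a P rule: less_induct)
  case (less M)
  show ?case
  proof (cases "M = 0")
    case True
    then have "P = {}" using less rod_ne by fastforce
    then show ?thesis using True by (intro exI[of _ "[]"]) simp
  next
    case False
    note U0 = less.prems(2) and D0 = less.prems(3) and R0 = less.prems(4) and p = less.prems(1)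
    from False have "p*a \<in> {p*a..<p*(a+M)}" using p by simp
    then have "p*a \<in> \<Union>P" using U0 by simp
    then obtain A where A: "A \<in> P" "p*a \<in> A" by (rule UnionE)
    from R0 A(1) obtain j n where jn: "n \<ge> 1" "A = rod p j n" by blast
    have Asub: "A \<subseteq> {p*a..<p*(a+M)}" using U0 A(1) by (metis Union_upper)
    have "p*j \<in> A" using jn rod_mem p by blast
    then have "p*j \<ge> p*a" using Asub by auto
    moreover have "p*a \<ge> p*j" using A jn by (auto simp: rod_def)
    ultimately have "p*j = p*a" by linarith
    then have ja: "j = a" using p by simp
    have pn: "p*n \<ge> 1" using jn p by simp
    have "p*a \<le> p*a+p*n-1" "p*a+p*n-1 < p*a+p*n" using pn by linarith+
    then have "p*a + p*n - 1 \<in> A" unfolding jn ja rod_def by simp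
    then have "p*a + p*n - 1 < p*(a+M)" using Asub by auto
    then have "p*n < p*M + 1" by (simp add: algebra_simps)
    then have "p*n \<le> p*M" by linarith
    then have nM: "n \<le> M" using p by simp
    define P' where "P' = P - {A}"
    have "\<Union>P' = \<Union>P - A"
    proof
      show "\<Union>P' \<subseteq> \<Union>P - A"
      proof
        fix x assume "x \<in> \<Union>P'"
        then obtain B where B: "B \<in> P" "B \<noteq> A" "x \<in> B" unfolding P'_def by blast
        then have "A \<inter> B = {}" using D0 A(1) by blast
        then show "x \<in> \<Union>P - A" using B by blast
      qed
      show "\<Union>P - A \<subseteq> \<Union>P'" unfolding P'_def by blast
    qed
    also have "\<dots> = {p*(a+n)..<p*(a+n+(M-n))}"
      unfolding U0 jn ja rod_def using nM by (auto simp: algebra_simps)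
    finally have U: "\<Union>P' = {p*(a+n)..<p*(a+n+(M-n))}" .
    have D': "\<forall>A\<in>P'. \<forall>B\<in>P'. A \<noteq> B \<longrightarrow> A \<inter> B = {}" using D0 unfolding P'_def by blast
    have R': "\<forall>A\<in>P'. \<exists>j n. n \<ge> 1 \<and> A = rod p j n" using R0 unfolding P'_def by blast
    have "M - n < M" using jn False by simp
    from less.IH[OF this p U D' R']
    obtain xs where xs: "pos xs" "sum_list xs = M - n" "P' = gen p (a+n) xs" by blast
    have "P = insert A P'" using A(1) unfolding P'_def by blast
    then have "P = gen p a (n#xs)" using xs jn ja by simp
    then show ?thesis
      using xs jn nM by (intro exI[of _ "n#xs"]) simp
  qed
qed

lemma rp_char: "p \<ge> 1 \<Longrightarrow> rod_partitions p N = gen p 0 ` compositions N"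
proof
  assume p: "p \<ge> 1"
  show "rod_partitions p N \<subseteq> gen p 0 ` compositions N"
  proof
    fix P assume "P \<in> rod_partitions p N"
    then obtain xs where "pos xs" "sum_list xs = N" "P = gen p 0 xs"
      using decomp[OF p, of P 0 N] by (auto simp: rod_partitions_def)
    then show "P \<in> gen p 0 ` compositions N" by (auto simp: compositions_def pos_def)
  qed
  show "gen p 0 ` compositions N \<subseteq> rod_partitions p N"
  proof
    fix P assume "P \<in> gen p 0 ` compositions N"
    then obtain xs where "pos xs" "sum_list xs = N" "P = gen p 0 xs"
      by (auto simp: compositions_def pos_def)
    then show "P \<in> rod_partitions p N"
      unfolding rod_partitions_def using Union_gen[of p 0 xs] gen_disj gen_rods by auto
  qed
qed



lemma comp_iff: "xs \<in> compositions N \<longleftrightarrow> pos xs \<and> sum_list xs = N"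
  by (auto simp: compositions_def pos_def)

lemma pos_len: "pos xs \<Longrightarrow> length xs \<le> sum_list xs"
  by (induction xs) auto

lemma comp_finite: "finite (compositions N)"
proof -
  have "compositions N \<subseteq> {xs. set xs \<subseteq> {0..N} \<and> length xs \<le> N}"
    by (auto simp: comp_iff dest: pos_len member_le_sum_list)
  moreover have "finite {xs. set xs \<subseteq> {0..N} \<and> length xs \<le> N}"
    by (rule finite_lists_length_le) simp
  ultimately show ?thesis by (rule finite_subset)
qed

lemma Min_rod: "p \<ge> 1 \<Longrightarrow> n \<ge> 1 \<Longrightarrow> Min (rod p j n) = p*j"
  by (rule Min_eqI) (auto simp: rod_def)

lemma renew: "p \<ge> 1 \<Longrightarrow> pos xs \<Longrightarrow>
   (p*k \<in> Min ` gen p j xs \<union> {p*(j+sum_list xs)}) = (\<exists>ys zs. xs = ys@zs \<and> j + sum_list ys = k)"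
proof (induction xs arbitrary: j)
  case Nil then show ?case by auto
next
  case (Cons n xs)
  have n1: "n \<ge> 1" and px: "pos xs" using Cons.prems by auto
  have "(p*k \<in> Min ` gen p j (n#xs) \<union> {p*(j+sum_list (n#xs))})
      = (p*k = p*j \<or> p*k \<in> Min ` gen p (j+n) xs \<union> {p*(j+n+sum_list xs)})"
    using Min_rod[OF Cons.prems(1) n1] by (auto simp: add.assoc)
  also have "\<dots> = (k = j \<or> (\<exists>ys zs. xs = ys@zs \<and> j + n + sum_list ys = k))"
    using Cons.IH[OF Cons.prems(1) px, of "j+n"] Cons.prems(1) by simp
  also have "\<dots> = (\<exists>ys zs. n#xs = ys@zs \<and> j + sum_list ys = k)"
  proof
    assume "k = j \<or> (\<exists>ys zs. xs = ys@zs \<and> j + n + sum_list ys = k)"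
    then show "\<exists>ys zs. n#xs = ys@zs \<and> j + sum_list ys = k"
    proof
      assume "k = j" then show ?thesis by (intro exI[of _ "[]"] exI[of _ "n#xs"]) simp
    next
      assume "\<exists>ys zs. xs = ys@zs \<and> j + n + sum_list ys = k"
      then obtain ys zs where "xs = ys@zs" "j + n + sum_list ys = k" by blast
      then show ?thesis by (intro exI[of _ "n#ys"] exI[of _ zs]) (simp add: add.assoc)
    qed
  next
    assume "\<exists>ys zs. n#xs = ys@zs \<and> j + sum_list ys = k"
    then obtain ys zs where yz: "n#xs = ys@zs" "j + sum_list ys = k" by blast
    show "k = j \<or> (\<exists>ys zs. xs = ys@zs \<and> j + n + sum_list ys = k)"
    proof (cases ys)
      case Nil then show ?thesis using yz by simp
    next
      case (Cons y ys')
      then have "y = n" "xs = ys'@zs" using yz by auto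
      then show ?thesis using yz Cons by (auto simp: add.assoc)
    qed
  qed
  finally show ?case .
qed

lemma restrict_union: "(\<forall>A\<in>X. A \<subseteq> S \<and> A \<noteq> {}) \<Longrightarrow> (\<forall>A\<in>Y. A \<inter> S = {}) \<Longrightarrow> restrict_part (X \<union> Y) S = X"
  unfolding restrict_part_def
proof (intro equalityI subsetI)
  fix x assume a: "\<forall>A\<in>X. A \<subseteq> S \<and> A \<noteq> {}" "\<forall>A\<in>Y. A \<inter> S = {}" and x: "x \<in> (\<lambda>A. A \<inter> S) ` (X \<union> Y) - {{}}"
  then obtain A where "A \<in> X \<union> Y" "x = A \<inter> S" "x \<noteq> {}" by blast
  then show "x \<in> X" using a by (metis Int_absorb2 Un_iff)
next
  fix x assume a: "\<forall>A\<in>X. A \<subseteq> S \<and> A \<noteq> {}" "\<forall>A\<in>Y. A \<inter> S = {}" and x: "x \<in> X"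
  then have "x = x \<inter> S" "x \<noteq> {}" by auto
  then show "x \<in> (\<lambda>A. A \<inter> S) ` (X \<union> Y) - {{}}" using x by blast
qed

lemma gen_ne: "p \<ge> 1 \<Longrightarrow> pos xs \<Longrightarrow> A \<in> gen p j xs \<Longrightarrow> A \<noteq> {}"
  using gen_rods rod_ne by metis

lemma restr_L: "p \<ge> 1 \<Longrightarrow> pos ys \<Longrightarrow> pos zs \<Longrightarrow>
  restrict_part (gen p 0 (ys@zs)) {0..<p * sum_list ys} = gen p 0 ys"
  unfolding gen_append
  apply (rule restrict_union)
  using gen_sub gen_ne apply fastforce
  using gen_sub by fastforce

lemma restr_R: "p \<ge> 1 \<Longrightarrow> pos ys \<Longrightarrow> pos zs \<Longrightarrow>
  restrict_part (gen p 0 (ys@zs)) {p * sum_list ys..<p*(sum_list ys + sum_list zs)} = gen p (sum_list ys) zs"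
  unfolding gen_append add_0_left Un_commute[of "gen p 0 ys"]
  apply (rule restrict_union)
  using gen_sub gen_ne apply fastforce
  using gen_sub by fastforce

lemma EL: "p \<ge> 1 \<Longrightarrow> pos xs \<Longrightarrow> sum_list xs = N \<Longrightarrow>
  (gen p 0 xs \<in> event_L p N r Q1) = (\<exists>ys zs. xs = ys@zs \<and> sum_list ys = r \<and> gen p 0 ys = Q1)"
proof -
  assume p: "p \<ge> 1" and px: "pos xs" and N: "sum_list xs = N"
  have rp: "(p*r \<in> renewal_points p N (gen p 0 xs)) = (\<exists>ys zs. xs = ys@zs \<and> sum_list ys = r)"
    using renew[OF p px, of r 0] N by (simp add: renewal_points_def)
  show ?thesis
  proof
    assume "gen p 0 xs \<in> event_L p N r Q1"
    then have a: "p*r \<in> renewal_points p N (gen p 0 xs)" "restrict_part (gen p 0 xs) {0..<p*r} = Q1"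
      by (auto simp: event_L_def)
    then obtain ys zs where yz: "xs = ys@zs" "sum_list ys = r" using rp by blast
    then have "restrict_part (gen p 0 xs) {0..<p*r} = gen p 0 ys" using restr_L[OF p] px by auto
    then show "\<exists>ys zs. xs = ys@zs \<and> sum_list ys = r \<and> gen p 0 ys = Q1" using yz a by auto
  next
    assume "\<exists>ys zs. xs = ys@zs \<and> sum_list ys = r \<and> gen p 0 ys = Q1"
    then obtain ys zs where yz: "xs = ys@zs" "sum_list ys = r" "gen p 0 ys = Q1" by blast
    then have "restrict_part (gen p 0 xs) {0..<p*r} = gen p 0 ys" using restr_L[OF p] px by auto
    moreover have "p*r \<in> renewal_points p N (gen p 0 xs)" using rp yz by blast
    ultimately show "gen p 0 xs \<in> event_L p N r Q1" using yz by (auto simp: event_L_def)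
  qed
qed

lemma ER: "p \<ge> 1 \<Longrightarrow> pos xs \<Longrightarrow> sum_list xs = N \<Longrightarrow>
  (gen p 0 xs \<in> event_R p N s Q2) = (\<exists>ys zs. xs = ys@zs \<and> sum_list ys = s \<and> gen p s zs = Q2)"
proof -
  assume p: "p \<ge> 1" and px: "pos xs" and N: "sum_list xs = N"
  have rp: "(p * s \<in> renewal_points p N (gen p 0 xs)) = (\<exists>ys zs. xs = ys@zs \<and> sum_list ys = s)"
    using renew[OF p px, of s 0] N by (simp add: renewal_points_def)
  have rr: "restrict_part (gen p 0 xs) {p * s..<p*N} = gen p s zs" if "xs = ys@zs" "sum_list ys = s" for ys zs
    using restr_R[OF p, of ys zs] px that N by auto
  show ?thesis
  proof
    assume "gen p 0 xs \<in> event_R p N s Q2"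
    then have a: "p * s \<in> renewal_points p N (gen p 0 xs)" "restrict_part (gen p 0 xs) {p * s..<p*N} = Q2"
      by (auto simp: event_R_def)
    then obtain ys zs where yz: "xs = ys@zs" "sum_list ys = s" using rp by blast
    then show "\<exists>ys zs. xs = ys@zs \<and> sum_list ys = s \<and> gen p s zs = Q2" using rr[OF yz] a by auto
  next
    assume "\<exists>ys zs. xs = ys@zs \<and> sum_list ys = s \<and> gen p s zs = Q2"
    then obtain ys zs where yz: "xs = ys@zs" "sum_list ys = s" "gen p s zs = Q2" by blast
    moreover have "p * s \<in> renewal_points p N (gen p 0 xs)" using rp yz by blast
    ultimately show "gen p 0 xs \<in> event_R p N s Q2" using rr by (auto simp: event_R_def)
  qed
qed

lemma split_unique: "pos ys \<Longrightarrow> pos ys' \<Longrightarrow> ys@t = ys'@t' \<Longrightarrow> sum_list ys = sum_list ys' \<Longrightarrow> ys = ys' \<and> t = t'"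
proof -
  assume a: "pos ys" "pos ys'" "ys@t = ys'@t'" "sum_list ys = sum_list ys'"
  have z: "us = []" if "pos us" "sum_list us = 0" for us :: "nat list"
    using that by (cases us) auto
  from a(3) obtain us where "(ys = ys'@us \<and> us@t = t') \<or> (ys@us = ys' \<and> t = us@t')"
    by (auto simp: append_eq_append_conv2)
  then show ?thesis
  proof
    assume h: "ys = ys'@us \<and> us@t = t'"
    then have "us = []" using z[of us] a by auto
    then show ?thesis using h by simp
  next
    assume h: "ys@us = ys' \<and> t = us@t'"
    then have "us = []" using z[of us] a by auto
    then show ?thesis using h by simp
  qed
qed

lemma split_prefix: "pos ys \<Longrightarrow> pos ys' \<Longrightarrow> ys@t = ys'@zs \<Longrightarrow> sum_list ys \<le> sum_list ys' \<Longrightarrow> \<exists>ms. ys' = ys@ms \<and> t = ms@zs"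
proof -
  assume a: "pos ys" "pos ys'" "ys@t = ys'@zs" "sum_list ys \<le> sum_list ys'"
  have z: "us = []" if "pos us" "sum_list us = 0" for us :: "nat list"
    using that by (cases us) auto
  from a(3) obtain us where "(ys = ys'@us \<and> us@t = zs) \<or> (ys@us = ys' \<and> t = us@zs)"
    by (auto simp: append_eq_append_conv2)
  then show ?thesis
  proof
    assume h: "ys = ys'@us \<and> us@t = zs"
    then have "us = []" using z[of us] a by auto
    then show ?thesis using h by (intro exI[of _ "[]"]) simp
  next
    assume h: "ys@us = ys' \<and> t = us@zs"
    then show ?thesis by blast
  qed
qed



definition W :: "(nat \<Rightarrow> real) \<Rightarrow> nat list \<Rightarrow> real" where "W q xs = prod_list (map q xs)"

lemma W_append: "W q (xs@ys) = W q xs * W q ys" by (simp add: W_def)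

lemma num_eq: assumes p: "p \<ge> 1"
  shows "(\<Sum>P\<in>rod_partitions p N \<inter> E. part_weight p q P) = (\<Sum>xs\<in>{xs\<in>compositions N. gen p 0 xs \<in> E}. W q xs)"
proof -
  have s: "rod_partitions p N \<inter> E = gen p 0 ` {xs\<in>compositions N. gen p 0 xs \<in> E}"
    using rp_char[OF p] by auto
  have i: "inj_on (gen p 0) {xs\<in>compositions N. gen p 0 xs \<in> E}"
    by (rule inj_onI) (auto simp: comp_iff intro: gen_inj[OF p])
  show ?thesis unfolding s sum.reindex[OF i] o_def
    by (rule sum.cong) (auto simp: comp_iff gen_weight[OF p] W_def)
qed

lemma inj2: "inj_on (\<lambda>(ys,zs). ys@zs) (compositions a \<times> X)"
proof (rule inj_onI)
  fix u v assume u: "u \<in> compositions a \<times> X" and v: "v \<in> compositions a \<times> X"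
    and e: "(\<lambda>(ys,zs). ys@zs) u = (\<lambda>(ys,zs). ys@zs) v"
  obtain y1 z1 where u': "u = (y1,z1)" by (cases u) auto
  obtain y2 z2 where v': "v = (y2,z2)" by (cases v) auto
  have "y1 = y2 \<and> z1 = z2" using split_unique[of y1 y2 z1 z2] u v e u' v' by (auto simp: comp_iff)
  then show "u = v" using u' v' by simp
qed

lemma inj3: "inj_on (\<lambda>(ys,ms,zs). ys@ms@zs) (compositions a \<times> (compositions b \<times> X))"
proof (rule inj_onI)
  fix u v assume u: "u \<in> compositions a \<times> (compositions b \<times> X)" and v: "v \<in> compositions a \<times> (compositions b \<times> X)"
    and e: "(\<lambda>(ys,ms,zs). ys@ms@zs) u = (\<lambda>(ys,ms,zs). ys@ms@zs) v"
  obtain y1 m1 z1 where u': "u = (y1,m1,z1)" by (cases u) auto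
  obtain y2 m2 z2 where v': "v = (y2,m2,z2)" by (cases v) auto
  have "y1 = y2 \<and> m1@z1 = m2@z2" using split_unique[of y1 y2 "m1@z1" "m2@z2"] u v e u' v' by (auto simp: comp_iff)
  moreover then have "m1 = m2 \<and> z1 = z2" using split_unique[of m1 m2 z1 z2] u v u' v' by (auto simp: comp_iff)
  ultimately show "u = v" using u' v' by simp
qed

lemma sum2: "finite A \<Longrightarrow> finite B \<Longrightarrow> (\<Sum>(ys,zs)\<in>A \<times> B. W q (ys@zs)) = sum (W q) A * sum (W q) B"
  by (simp add: W_append sum_product sum.cartesian_product)

lemma sum3: assumes "finite A" "finite B" "finite C" shows
   "(\<Sum>(ys,ms,zs)\<in>A \<times> (B \<times> C). W q (ys@ms@zs)) = sum (W q) A * sum (W q) B * sum (W q) C"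
proof -
  have "(\<Sum>(ys,ms,zs)\<in>A \<times> (B \<times> C). W q (ys@ms@zs)) = (\<Sum>(ys,t)\<in>A \<times> (B \<times> C). W q ys * (\<lambda>(ms,zs). W q (ms@zs)) t)"
    by (rule sum.cong) (auto simp: W_append)
  also have "\<dots> = (\<Sum>ys\<in>A. \<Sum>t\<in>B \<times> C. W q ys * (\<lambda>(ms,zs). W q (ms@zs)) t)"
    by (rule sum.cartesian_product[symmetric])
  also have "\<dots> = sum (W q) A * (\<Sum>t\<in>B \<times> C. (\<lambda>(ms,zs). W q (ms@zs)) t)"
    by (rule sum_product[symmetric])
  also have "(\<Sum>t\<in>B \<times> C. (\<lambda>(ms,zs). W q (ms@zs)) t) = sum (W q) B * sum (W q) C"
    using sum2[OF assms(2,3), of q] by simp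
  finally show ?thesis by (simp add: mult.assoc)
qed

lemma SL: assumes p: "p \<ge> 1" and rN: "r \<le> N"
  shows "{xs\<in>compositions N. gen p 0 xs \<in> event_L p N r Q1}
    = (\<lambda>(ys,zs). ys@zs) ` ({ys\<in>compositions r. gen p 0 ys = Q1} \<times> compositions (N-r))"
proof (intro equalityI subsetI)
  fix xs assume "xs \<in> {xs\<in>compositions N. gen p 0 xs \<in> event_L p N r Q1}"
  then have x: "pos xs" "sum_list xs = N" "gen p 0 xs \<in> event_L p N r Q1" by (auto simp: comp_iff)
  then obtain ys zs where "xs = ys@zs" "sum_list ys = r" "gen p 0 ys = Q1" using EL[OF p] by blast
  then show "xs \<in> (\<lambda>(ys,zs). ys@zs) ` ({ys\<in>compositions r. gen p 0 ys = Q1} \<times> compositions (N-r))"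
    using x by (auto simp: comp_iff image_iff intro!: bexI[of _ "(ys,zs)"])
next
  fix xs assume "xs \<in> (\<lambda>(ys,zs). ys@zs) ` ({ys\<in>compositions r. gen p 0 ys = Q1} \<times> compositions (N-r))"
  then obtain ys zs where y: "xs = ys@zs" "ys \<in> compositions r" "gen p 0 ys = Q1" "zs \<in> compositions (N-r)" by auto
  then have "pos xs" "sum_list xs = N" using rN by (auto simp: comp_iff)
  moreover then have "gen p 0 xs \<in> event_L p N r Q1" using EL[OF p] y by (auto simp: comp_iff)
  ultimately show "xs \<in> {xs\<in>compositions N. gen p 0 xs \<in> event_L p N r Q1}" by (auto simp: comp_iff)
qed

lemma SR: assumes p: "p \<ge> 1" and sN: "s \<le> N"
  shows "{xs\<in>compositions N. gen p 0 xs \<in> event_R p N s Q2}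
    = (\<lambda>(ys,zs). ys@zs) ` (compositions s \<times> {zs\<in>compositions (N-s). gen p s zs = Q2})"
proof (intro equalityI subsetI)
  fix xs assume "xs \<in> {xs\<in>compositions N. gen p 0 xs \<in> event_R p N s Q2}"
  then have x: "pos xs" "sum_list xs = N" "gen p 0 xs \<in> event_R p N s Q2" by (auto simp: comp_iff)
  then obtain ys zs where "xs = ys@zs" "sum_list ys = s" "gen p s zs = Q2" using ER[OF p] by blast
  then show "xs \<in> (\<lambda>(ys,zs). ys@zs) ` (compositions s \<times> {zs\<in>compositions (N-s). gen p s zs = Q2})"
    using x by (intro rev_image_eqI[of "(ys,zs)"]) (auto simp: comp_iff)
next
  fix xs assume "xs \<in> (\<lambda>(ys,zs). ys@zs) ` (compositions s \<times> {zs\<in>compositions (N-s). gen p s zs = Q2})"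
  then obtain ys zs where y: "xs = ys@zs" "ys \<in> compositions s" "gen p s zs = Q2" "zs \<in> compositions (N-s)" by auto
  then have "pos xs" "sum_list xs = N" using sN by (auto simp: comp_iff)
  moreover then have "gen p 0 xs \<in> event_R p N s Q2" using ER[OF p] y by (auto simp: comp_iff)
  ultimately show "xs \<in> {xs\<in>compositions N. gen p 0 xs \<in> event_R p N s Q2}" by (auto simp: comp_iff)
qed

lemma SLR: assumes p: "p \<ge> 1" and rs: "r \<le> s" and sN: "s \<le> N"
  shows "{xs\<in>compositions N. gen p 0 xs \<in> event_L p N r Q1 \<inter> event_R p N s Q2}
    = (\<lambda>(ys,ms,zs). ys@ms@zs) ` ({ys\<in>compositions r. gen p 0 ys = Q1} \<times> (compositions (s-r) \<times> {zs\<in>compositions (N-s). gen p s zs = Q2}))"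
proof (intro equalityI subsetI)
  fix xs assume "xs \<in> {xs\<in>compositions N. gen p 0 xs \<in> event_L p N r Q1 \<inter> event_R p N s Q2}"
  then have x: "pos xs" "sum_list xs = N" "gen p 0 xs \<in> event_L p N r Q1" "gen p 0 xs \<in> event_R p N s Q2" by (auto simp: comp_iff)
  then obtain ys t where yt: "xs = ys@t" "sum_list ys = r" "gen p 0 ys = Q1" using EL[OF p] by blast
  obtain ys' zs where yz: "xs = ys'@zs" "sum_list ys' = s" "gen p s zs = Q2" using ER[OF p] x by blast
  have "pos (ys@t)" "pos (ys'@zs)" using x yt yz by auto
  then have "pos ys" "pos ys'" "pos t" "pos zs" by auto
  then obtain ms where ms: "ys' = ys@ms" "t = ms@zs" using split_prefix[of ys ys' t zs] yt yz rs by auto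
  have "pos ms" using \<open>pos ys'\<close> ms by simp
  show "xs \<in> (\<lambda>(ys,ms,zs). ys@ms@zs) ` ({ys\<in>compositions r. gen p 0 ys = Q1} \<times> (compositions (s-r) \<times> {zs\<in>compositions (N-s). gen p s zs = Q2}))"
    using x yt yz ms \<open>pos ys\<close> \<open>pos ms\<close> \<open>pos zs\<close>
    by (intro rev_image_eqI[of "(ys,ms,zs)"]) (auto simp: comp_iff)
next
  fix xs assume "xs \<in> (\<lambda>(ys,ms,zs). ys@ms@zs) ` ({ys\<in>compositions r. gen p 0 ys = Q1} \<times> (compositions (s-r) \<times> {zs\<in>compositions (N-s). gen p s zs = Q2}))"
  then obtain ys ms zs where y: "xs = ys@ms@zs" "ys \<in> compositions r" "gen p 0 ys = Q1" "ms \<in> compositions (s-r)" 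
     "zs \<in> compositions (N-s)" "gen p s zs = Q2" by auto
  then have px: "pos xs" "sum_list xs = N" using rs sN by (auto simp: comp_iff)
  have "gen p 0 xs \<in> event_L p N r Q1" using EL[OF p px] y by (auto simp: comp_iff)
  moreover have "xs = (ys@ms)@zs \<and> sum_list (ys@ms) = s \<and> gen p s zs = Q2" using y rs by (auto simp: comp_iff)
  then have "gen p 0 xs \<in> event_R p N s Q2" using ER[OF p px] by blast
  ultimately show "xs \<in> {xs\<in>compositions N. gen p 0 xs \<in> event_L p N r Q1 \<inter> event_R p N s Q2}"
    using px by (auto simp: comp_iff)
qed



lemma core:
  fixes x y z w c B m e :: real
  assumes c: "c > 0" and m: "m > 0" and B: "B \<ge> 0"
    and bx: "\<bar>x\<bar> \<le> B" and by': "\<bar>y\<bar> \<le> B" and bz: "\<bar>z\<bar> \<le> B" and bw: "\<bar>w\<bar> \<le> B"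
    and ym: "y \<ge> m" and zm: "z \<ge> m"
    and ex: "\<bar>x - c\<bar> \<le> e" and ey: "\<bar>y - c\<bar> \<le> e" and ez: "\<bar>z - c\<bar> \<le> e" and ew: "\<bar>w - c\<bar> \<le> e"
  shows "\<bar>x*w - y*z\<bar> \<le> max (2*B^2/(m^2*(c/2))) ((2*B+2*c)*4/c^2) * y*z*e"
proof -
  define K where "K = max (2*B^2/(m^2*(c/2))) ((2*B+2*c)*4/c^2)"
  have e0: "e \<ge> 0" using ex by linarith
  have K1: "K \<ge> 2*B^2/(m^2*(c/2))" and K2: "K \<ge> (2*B+2*c)*4/c^2" by (auto simp: K_def)
  have K0: "K \<ge> 0" using K2 B c by (smt (verit) divide_nonneg_pos zero_less_power)
  have main: "\<bar>x*w - y*z\<bar> \<le> K*y*z*e"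
  proof (cases "e \<ge> c/2")
    case True
    have "\<bar>x*w - y*z\<bar> \<le> \<bar>x\<bar>*\<bar>w\<bar> + \<bar>y\<bar>*\<bar>z\<bar>" by (simp add: abs_mult[symmetric] abs_triangle_ineq4)
    also have "\<dots> \<le> B*B + B*B" by (intro add_mono mult_mono) (use bx by' bz bw B in auto)
    also have "\<dots> = 2*B^2/(m^2*(c/2)) * (m*m*(c/2))" using m c by (simp add: power2_eq_square field_simps)
    also have "\<dots> \<le> K * (y*z*e)"
    proof (rule mult_mono)
      show "m*m*(c/2) \<le> y*z*e" using ym zm True m c by (intro mult_mono) auto
    qed (use K1 K0 m c in auto)
    finally show ?thesis by (simp add: mult.assoc)
  next
    case False
    have yc: "y \<ge> c/2" "z \<ge> c/2" using ey ez False by linarith+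
    have "x*w - y*z = (x-c)*w + c*(w-c) - (y-c)*z - c*(z-c)" by (simp add: algebra_simps)
    moreover have "\<bar>(x-c)*w + c*(w-c) - (y-c)*z - c*(z-c)\<bar> \<le> \<bar>(x-c)*w\<bar> + \<bar>c*(w-c)\<bar> + \<bar>(y-c)*z\<bar> + \<bar>c*(z-c)\<bar>"
      by arith
    moreover have "\<bar>c*(w-c)\<bar> = c*\<bar>w-c\<bar>" "\<bar>c*(z-c)\<bar> = c*\<bar>z-c\<bar>" using c by (simp_all add: abs_mult)
    ultimately have "\<bar>x*w - y*z\<bar> \<le> \<bar>x-c\<bar>*\<bar>w\<bar> + c*\<bar>w-c\<bar> + \<bar>y-c\<bar>*\<bar>z\<bar> + c*\<bar>z-c\<bar>"
      using c by (simp add: abs_mult)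
    also have "\<dots> \<le> e*B + c*e + e*B + c*e"
      by (intro add_mono mult_mono) (use ex ew ey ez bw bz c e0 in auto)
    also have "\<dots> = (2*B+2*c)*4/c^2 * (c/2*(c/2)) * e" using c by (simp add: power2_eq_square field_simps)
    also have "\<dots> \<le> K * (y*z) * e"
    proof -
      have h: "c/2*(c/2) \<le> y*z" using yc c by (intro mult_mono) auto
      have "(2*B+2*c)*4/c^2 * (c/2*(c/2)) \<le> K*(y*z)"
        by (rule mult_mono) (use K2 K0 c B h in auto)
      then show ?thesis using e0 by (rule mult_right_mono)
    qed
    finally show ?thesis by (simp add: mult.assoc)
  qed
  then show ?thesis unfolding K_def .
qed



lemma u_eq: "renewal_u q N = sum (W q) (compositions N)"
  by (simp add: renewal_u_def W_def)

lemma W_nonneg: "(\<And>n. q n \<ge> 0) \<Longrightarrow> W q xs \<ge> 0"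
  unfolding W_def by (rule prod_list_nonneg) auto

lemma u_nonneg: "(\<And>n. q n \<ge> 0) \<Longrightarrow> renewal_u q N \<ge> 0"
  unfolding u_eq by (rule sum_nonneg) (simp add: W_nonneg)

lemma pw_nonneg: "(\<And>n. q n \<ge> 0) \<Longrightarrow> part_weight p q P \<ge> 0"
  unfolding part_weight_def by (rule prod_nonneg) auto

lemma mu_ge1:
  assumes q_nonneg: "\<And>n. q n \<ge> 0" and q_sum: "(\<lambda>n. q (Suc n)) sums 1"
    and q_mean: "summable (\<lambda>n. real n * q n)"
  shows "renewal_mu q \<ge> 1"
proof -
  have "(\<Sum>n. real (Suc n) * q (Suc n)) = renewal_mu q - 0"
    unfolding renewal_mu_def using suminf_split_head[OF q_mean] by simp
  moreover have "(\<Sum>n. q (Suc n)) \<le> (\<Sum>n. real (Suc n) * q (Suc n))"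
  proof (rule suminf_le)
    show "q (Suc n) \<le> real (Suc n) * q (Suc n)" for n using q_nonneg[of "Suc n"]
      by (simp add: algebra_simps)
    show "summable (\<lambda>n. q (Suc n))" using q_sum by (rule sums_summable)
    show "summable (\<lambda>n. real (Suc n) * q (Suc n))"
      using q_mean summable_Suc_iff[of "\<lambda>n. real n * q n"] by simp
  qed
  moreover have "(\<Sum>n. q (Suc n)) = 1" using q_sum by (rule sums_unique[symmetric])
  ultimately show ?thesis by simp
qed

lemma nums:
  fixes q :: "nat \<Rightarrow> real" and Q1 Q2 :: "nat set set" and p r s N :: nat
  assumes p: "p \<ge> 1" and rs: "r \<le> s" and sN: "s \<le> N"
  defines "a \<equiv> sum (W q) {ys\<in>compositions r. gen p 0 ys = Q1}"
    and "b \<equiv> sum (W q) {zs\<in>compositions (N-s). gen p s zs = Q2}"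
  shows "(\<Sum>P\<in>rod_partitions p N \<inter> event_L p N r Q1. part_weight p q P) = a * renewal_u q (N-r)"
    and "(\<Sum>P\<in>rod_partitions p N \<inter> event_R p N s Q2. part_weight p q P) = renewal_u q s * b"
    and "(\<Sum>P\<in>rod_partitions p N \<inter> (event_L p N r Q1 \<inter> event_R p N s Q2). part_weight p q P)
           = a * renewal_u q (s-r) * b"
proof -
  define LS where "LS = {ys\<in>compositions r. gen p 0 ys = Q1}"
  define RS where "RS = {zs\<in>compositions (N-s). gen p s zs = Q2}"
  have fL: "finite LS" and fR: "finite RS" unfolding LS_def RS_def using comp_finite by auto
  have iL: "inj_on (\<lambda>(ys,zs). ys@zs) (LS \<times> compositions (N-r))"
    by (rule inj_on_subset[OF inj2[of r "compositions (N-r)"]]) (auto simp: LS_def)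
  have iR: "inj_on (\<lambda>(ys,zs). ys@zs) (compositions s \<times> RS)" by (rule inj2)
  have iLR: "inj_on (\<lambda>(ys,ms,zs). ys@ms@zs) (LS \<times> (compositions (s-r) \<times> RS))"
    by (rule inj_on_subset[OF inj3[of r "s-r" RS]]) (auto simp: LS_def)
  have "(\<Sum>P\<in>rod_partitions p N \<inter> event_L p N r Q1. part_weight p q P)
      = sum (W q) ((\<lambda>(ys,zs). ys@zs) ` (LS \<times> compositions (N-r)))"
    unfolding num_eq[OF p] SL[OF p order.trans[OF rs sN]] LS_def ..
  also have "\<dots> = (\<Sum>(ys,zs)\<in>LS \<times> compositions (N-r). W q (ys@zs))"
    by (subst sum.reindex[OF iL]) (simp add: case_prod_unfold o_def)
  also have "\<dots> = sum (W q) LS * sum (W q) (compositions (N-r))" by (rule sum2[OF fL comp_finite])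
  also have "\<dots> = a * renewal_u q (N-r)" by (simp add: u_eq a_def LS_def)
  finally show "(\<Sum>P\<in>rod_partitions p N \<inter> event_L p N r Q1. part_weight p q P) = a * renewal_u q (N-r)" .
  have "(\<Sum>P\<in>rod_partitions p N \<inter> event_R p N s Q2. part_weight p q P)
      = sum (W q) ((\<lambda>(ys,zs). ys@zs) ` (compositions s \<times> RS))"
    unfolding num_eq[OF p] SR[OF p sN] RS_def ..
  also have "\<dots> = (\<Sum>(ys,zs)\<in>compositions s \<times> RS. W q (ys@zs))"
    by (subst sum.reindex[OF iR]) (simp add: case_prod_unfold o_def)
  also have "\<dots> = sum (W q) (compositions s) * sum (W q) RS" by (rule sum2[OF comp_finite fR])
  also have "\<dots> = renewal_u q s * b" by (simp add: u_eq b_def RS_def)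
  finally show "(\<Sum>P\<in>rod_partitions p N \<inter> event_R p N s Q2. part_weight p q P) = renewal_u q s * b" .
  have "(\<Sum>P\<in>rod_partitions p N \<inter> (event_L p N r Q1 \<inter> event_R p N s Q2). part_weight p q P)
      = sum (W q) ((\<lambda>(ys,ms,zs). ys@ms@zs) ` (LS \<times> (compositions (s-r) \<times> RS)))"
    unfolding num_eq[OF p] SLR[OF p rs sN] LS_def RS_def ..
  also have "\<dots> = (\<Sum>(ys,ms,zs)\<in>LS \<times> (compositions (s-r) \<times> RS). W q (ys@ms@zs))"
    by (subst sum.reindex[OF iLR]) (simp add: case_prod_unfold o_def)
  also have "\<dots> = sum (W q) LS * sum (W q) (compositions (s-r)) * sum (W q) RS" by (rule sum3[OF fL comp_finite fR])
  also have "\<dots> = a * renewal_u q (s-r) * b" by (simp add: u_eq a_def b_def LS_def RS_def)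
  finally show "(\<Sum>P\<in>rod_partitions p N \<inter> (event_L p N r Q1 \<inter> event_R p N s Q2). part_weight p q P)
           = a * renewal_u q (s-r) * b" .
qed



theorem lemma5p8:
  fixes p :: nat and q :: "nat \<Rightarrow> real"
  assumes p_pos: "p \<ge> 1"
    and q_nonneg: "\<And>n. q n \<ge> 0"
    and q_sum: "(\<lambda>n. q (Suc n)) sums 1"
    and q_mean: "summable (\<lambda>n. real n * q n)"
    and u_lim: "renewal_u q \<longlonglongrightarrow> 1 / renewal_mu q"
  shows "\<exists>K::real. \<forall>d r s N :: nat. \<forall>Q1 Q2 :: nat set set.
    r \<le> s \<longrightarrow> s \<le> N \<longrightarrow> s - r \<ge> d \<longrightarrow>
    \<bar>prob_N p q N (event_L p N r Q1 \<inter> event_R p N s Q2)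
       - prob_N p q N (event_L p N r Q1) * prob_N p q N (event_R p N s Q2)\<bar>
    \<le> K * prob_N p q N (event_L p N r Q1) * prob_N p q N (event_R p N s Q2)
        * (SUP k\<in>{d..}. \<bar>renewal_u q k - 1 / renewal_mu q\<bar>)"
proof -
  define u where "u = renewal_u q"
  define c where "c = 1 / renewal_mu q"
  have c: "c > 0" using mu_ge1[OF q_nonneg q_sum q_mean] by (simp add: c_def)
  have ul: "u \<longlonglongrightarrow> c" using u_lim by (simp add: u_def c_def)
  obtain B where B: "B > 0" "\<And>k. \<bar>u k\<bar> \<le> B"
    using BseqE[OF convergent_imp_Bseq[OF convergentI[OF ul]]] by (metis real_norm_def)
  obtain k0 where k0: "\<And>k. k \<ge> k0 \<Longrightarrow> \<bar>u k - c\<bar> < c/2"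
    using ul c unfolding LIMSEQ_iff by (metis half_gt_zero real_norm_def)
  define M where "M = insert (c/2) (u ` {k. k < k0 \<and> u k > 0})"
  define m where "m = Min M"
  have fM: "finite M" "M \<noteq> {}" by (auto simp: M_def)
  have m0: "m > 0" unfolding m_def using fM c by (auto simp: M_def)
  have mle: "m \<le> u k" if "u k > 0" for k
  proof (cases "k < k0")
    case True then have "u k \<in> M" using that by (auto simp: M_def)
    then show ?thesis unfolding m_def using fM by simp
  next
    case False
    then have "\<bar>u k - c\<bar> < c/2" using k0 by simp
    moreover have "c/2 \<in> M" by (simp add: M_def)
    then have "m \<le> c/2" unfolding m_def using Min_le[OF fM(1)] by blast
    ultimately show ?thesis by linarith
  qed
  have u0: "\<And>k. u k \<ge> 0" unfolding u_def by (rule u_nonneg) (rule q_nonneg)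
  define K where "K = max (2*B^2/(m^2*(c/2))) ((2*B+2*c)*4/c^2)"
  show ?thesis
  proof (intro exI[of _ K] allI impI)
    fix d r s N :: nat and Q1 Q2 :: "nat set set"
    assume rs: "r \<le> s" and sN: "s \<le> N" and d: "s - r \<ge> d"
    define e where "e = (SUP k\<in>{d..}. \<bar>u k - c\<bar>)"
    have bdd: "bdd_above ((\<lambda>k. \<bar>u k - c\<bar>) ` {d..})"
    proof (rule bdd_aboveI2)
      fix k show "\<bar>u k - c\<bar> \<le> B + c" using B(2)[of k] c by linarith
    qed
    have eb: "\<bar>u k - c\<bar> \<le> e" if "k \<ge> d" for k
      unfolding e_def by (rule cSUP_upper[OF _ bdd]) (use that in simp)
    define a where "a = sum (W q) {ys\<in>compositions r. gen p 0 ys = Q1}"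
    define b where "b = sum (W q) {zs\<in>compositions (N-s). gen p s zs = Q2}"
    have a0: "a \<ge> 0" and b0: "b \<ge> 0" unfolding a_def b_def
      by (auto intro!: sum_nonneg W_nonneg q_nonneg)
    define x where "x = u (s-r)"
    define y where "y = u (N-r)"
    define z where "z = u s"
    define w where "w = u N"
    define nL where "nL = (\<Sum>P\<in>rod_partitions p N \<inter> event_L p N r Q1. part_weight p q P)"
    define nR where "nR = (\<Sum>P\<in>rod_partitions p N \<inter> event_R p N s Q2. part_weight p q P)"
    define nLR where "nLR = (\<Sum>P\<in>rod_partitions p N \<inter> (event_L p N r Q1 \<inter> event_R p N s Q2). part_weight p q P)"
    have eL: "nL = a*y" and eR: "nR = z*b" and eLR: "nLR = a*x*b"
      using nums[OF p_pos rs sN] by (simp_all add: nL_def nR_def nLR_def a_def b_def x_def y_def z_def u_def)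
    have frp: "finite (rod_partitions p N)" using rp_char[OF p_pos] comp_finite by simp
    have LRL: "nLR \<le> nL" unfolding nLR_def nL_def
      by (rule sum_mono2) (use frp pw_nonneg[OF q_nonneg] in auto)
    have LRR: "nLR \<le> nR" unfolding nLR_def nR_def
      by (rule sum_mono2) (use frp pw_nonneg[OF q_nonneg] in auto)
    have LR0: "nLR \<ge> 0" unfolding nLR_def by (rule sum_nonneg) (use pw_nonneg[OF q_nonneg] in auto)
    have goal: "\<bar>nLR / w - nL / w * (nR / w)\<bar> \<le> K * (nL / w) * (nR / w) * e"
    proof (cases "w = 0 \<or> nL = 0 \<or> nR = 0")
      case True
      then show ?thesis
      proof (elim disjE)
        assume "nL = 0" then have "nLR = 0" using LRL LR0 by linarith
        then show ?thesis using \<open>nL = 0\<close> by simp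
      next
        assume "nR = 0" then have "nLR = 0" using LRR LR0 by linarith
        then show ?thesis using \<open>nR = 0\<close> by simp
      qed simp
    next
      case False
      then have w: "w > 0" using u0[of N] by (simp add: w_def)
      have "a \<noteq> 0" "y \<noteq> 0" "z \<noteq> 0" "b \<noteq> 0" using False eL eR by auto
      then have y: "y > 0" and z: "z > 0" and ab: "a*b \<ge> 0"
        using u0 a0 b0 by (auto simp: y_def z_def less_le)
      have core': "\<bar>x*w - y*z\<bar> \<le> K*y*z*e" unfolding K_def
      proof (rule core[OF c m0 less_imp_le[OF B(1)]])
        show "\<bar>x\<bar> \<le> B" "\<bar>y\<bar> \<le> B" "\<bar>z\<bar> \<le> B" "\<bar>w\<bar> \<le> B" by (simp_all add: x_def y_def z_def w_def B)
        show "m \<le> y" "m \<le> z" using mle y z by (simp_all add: y_def z_def)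
        show "\<bar>x - c\<bar> \<le> e" "\<bar>y - c\<bar> \<le> e" "\<bar>z - c\<bar> \<le> e" "\<bar>w - c\<bar> \<le> e"
          unfolding x_def y_def z_def w_def using eb d rs sN by auto
      qed
      have "nLR / w - nL / w * (nR / w) = (a*b/w^2) * (x*w - y*z)"
        using w unfolding eL eR eLR by (simp add: field_simps power2_eq_square)
      then have "\<bar>nLR / w - nL / w * (nR / w)\<bar> = (a*b/w^2) * \<bar>x*w - y*z\<bar>"
        using ab w a0 b0 by (simp add: abs_mult)
      also have "\<dots> \<le> (a*b/w^2) * (K*y*z*e)"
        using core' ab w by (intro mult_left_mono) auto
      also have "\<dots> = K * (nL / w) * (nR / w) * e"
        unfolding eL eR using w by (simp add: field_simps power2_eq_square)
      finally show ?thesis .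
    qed
    show "\<bar>prob_N p q N (event_L p N r Q1 \<inter> event_R p N s Q2)
       - prob_N p q N (event_L p N r Q1) * prob_N p q N (event_R p N s Q2)\<bar>
    \<le> K * prob_N p q N (event_L p N r Q1) * prob_N p q N (event_R p N s Q2)
        * (SUP k\<in>{d..}. \<bar>renewal_u q k - 1 / renewal_mu q\<bar>)"
      using goal unfolding prob_N_def nL_def nR_def nLR_def w_def e_def u_def c_def .
  qed
qed


end
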